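(* For every $d<\omega$ and every $C\subseteq(2^2)^d$, $C$ is a wide right-$\omega$-comb if and only if no two-element subset of $C$ is an up-$1$-comb.
   Context: $2^2=\{0,1\}^2$; $(2^2)^d$ is the set of sequences of length $d$ with entries in $2^2$, $(2^2)^{<d}$ those of length $<d$, $\tau^\frown a$ concatenation; "extends" means has as initial segment. For $A,B\subseteq(2^2)^d$: $A$ is narrowly below $B$ if there are $\tau\in(2^2)^{<d}$, $i<2$ with all elements of $A$ extending $\tau^\frown(i,0)$ and all of $B$ extending $\tau^\frown(i,1)$; $A$ is narrowly to the left of $B$ if there are $\tau$, $j<2$ with all elements of $A$ extending $\tau^\frown(0,j)$ and all of $B$ extending $\tau^\frown(1,j)$; $A$ is widely to the left of $B$ if there is $\sigma\in(2^2)^{<d}$ with all elements of $A$ extending $\sigma^\frown(0,0)$ or $\sigma^\frown(0,1)$ and all of $B$ extending $\sigma^\frown(1,0)$ or $\sigma^\frown(1,1)$. For $n\le\omega$: up-$n$-combs form the smallest class of finite sets containing singletons and containing $A\cup B$ whenever $A,B$ are up-$n$-combs, $|A|\le n$ and $A$ is narrowly below $B$; right-$n$-combs likewise with "narrowly to the left of"; wide right-$n$-combs form the smallest class containing singletons and containing $A\cup B$ whenever $A,B$ are right-$n$-combs, $|A|\le n$ and $A$ is widely to the left of $B$. *)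

theory Defs
  imports Main "HOL-Library.Extended_Nat"
begin

text \<open>The set 2 = {0,1} is represented by bool (False = 0, True = 1); an element of
  2^2 is a pair of bools; an element of (2^2)^d is a list of such pairs of length d.\<close>

type_synonym node = "(bool \<times> bool) list"

definition seqs :: "nat \<Rightarrow> node set" where
  "seqs d = {x. length x = d}"

definition extends :: "node \<Rightarrow> node \<Rightarrow> bool" where
  "extends x \<tau> \<longleftrightarrow> (\<exists>\<rho>. x = \<tau> @ \<rho>)"

definition narrowly_below :: "nat \<Rightarrow> node set \<Rightarrow> node set \<Rightarrow> bool" where
  "narrowly_below d A B \<longleftrightarrow> (\<exists>\<tau> i. length \<tau> < d \<and>
      (\<forall>a\<in>A. extends a (\<tau> @ [(i, False)])) \<and> (\<forall>b\<in>B. extends b (\<tau> @ [(i, True)])))"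

definition narrowly_left :: "nat \<Rightarrow> node set \<Rightarrow> node set \<Rightarrow> bool" where
  "narrowly_left d A B \<longleftrightarrow> (\<exists>\<tau> j. length \<tau> < d \<and>
      (\<forall>a\<in>A. extends a (\<tau> @ [(False, j)])) \<and> (\<forall>b\<in>B. extends b (\<tau> @ [(True, j)])))"

definition widely_left :: "nat \<Rightarrow> node set \<Rightarrow> node set \<Rightarrow> bool" where
  "widely_left d A B \<longleftrightarrow> (\<exists>\<sigma>. length \<sigma> < d \<and>
      (\<forall>a\<in>A. extends a (\<sigma> @ [(False, False)]) \<or> extends a (\<sigma> @ [(False, True)])) \<and>
      (\<forall>b\<in>B. extends b (\<sigma> @ [(True, False)]) \<or> extends b (\<sigma> @ [(True, True)])))"

inductive up_comb :: "nat \<Rightarrow> enat \<Rightarrow> node set \<Rightarrow> bool" for d n where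
  single: "x \<in> seqs d \<Longrightarrow> up_comb d n {x}"
| join: "up_comb d n A \<Longrightarrow> up_comb d n B \<Longrightarrow> enat (card A) \<le> n \<Longrightarrow>
          narrowly_below d A B \<Longrightarrow> up_comb d n (A \<union> B)"

inductive right_comb :: "nat \<Rightarrow> enat \<Rightarrow> node set \<Rightarrow> bool" for d n where
  single: "x \<in> seqs d \<Longrightarrow> right_comb d n {x}"
| join: "right_comb d n A \<Longrightarrow> right_comb d n B \<Longrightarrow> enat (card A) \<le> n \<Longrightarrow>
          narrowly_left d A B \<Longrightarrow> right_comb d n (A \<union> B)"

inductive wide_right_comb :: "nat \<Rightarrow> enat \<Rightarrow> node set \<Rightarrow> bool" for d n where
  single: "x \<in> seqs d \<Longrightarrow> wide_right_comb d n {x}"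
| join: "wide_right_comb d n A \<Longrightarrow> wide_right_comb d n B \<Longrightarrow> enat (card A) \<le> n \<Longrightarrow>
          widely_left d A B \<Longrightarrow> wide_right_comb d n (A \<union> B)"

end

theory Submission
  imports Defs
begin

definition sep :: "node \<Rightarrow> node \<Rightarrow> bool" where
  "sep x y \<longleftrightarrow> (\<exists>\<sigma> a b c e. a \<noteq> b \<and> extends x (\<sigma> @ [(a,c)]) \<and> extends y (\<sigma> @ [(b,e)]))"

lemma sep_sym: "sep x y \<Longrightarrow> sep y x"
proof -
  assume "sep x y"
  then obtain \<sigma> a b c e where "a \<noteq> b" "extends x (\<sigma> @ [(a,c)])" "extends y (\<sigma> @ [(b,e)])"
    unfolding sep_def by blast
  then show "sep y x" unfolding sep_def by (intro exI[of _ \<sigma>] exI[of _ b] exI[of _ a] exI[of _ e] exI[of _ c]) auto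
qed

lemma wide_sep:
  assumes "wide_right_comb d n C"
  shows "x \<in> C \<Longrightarrow> y \<in> C \<Longrightarrow> x \<noteq> y \<Longrightarrow> sep x y"
  using assms
proof (induction arbitrary: x y rule: wide_right_comb.induct)
  case (single z)
  then show ?case by auto
next
  case (join A B)
  have AB: "sep a b" if "a \<in> A" "b \<in> B" for a b
  proof -
    from \<open>widely_left d A B\<close> obtain \<sigma> where s: "(\<forall>a\<in>A. extends a (\<sigma> @ [(False, False)]) \<or> extends a (\<sigma> @ [(False, True)]))"
      "(\<forall>b\<in>B. extends b (\<sigma> @ [(True, False)]) \<or> extends b (\<sigma> @ [(True, True)]))"
      unfolding widely_left_def by blast
    have c: "extends a (\<sigma> @ [(False, c)])" if "c = (extends a (\<sigma> @ [(False, True)]))" for c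
      using s(1) that \<open>a \<in> A\<close> by (cases c) auto
    have e: "extends b (\<sigma> @ [(True, e)])" if "e = (extends b (\<sigma> @ [(True, True)]))" for e
      using s(2) that \<open>b \<in> B\<close> by (cases e) auto
    show ?thesis unfolding sep_def
      by (rule exI[of _ \<sigma>], rule exI[of _ False], rule exI[of _ True], rule exI, rule exI,
          intro conjI, simp, rule c, rule refl, rule e, rule refl)
  qed
  show ?case
  proof (cases "x \<in> A")
    case True
    show ?thesis
    proof (cases "y \<in> A")
      case True
      then show ?thesis using \<open>x \<in> A\<close> join.IH(1) join.prems(3) by blast
    next
      case False
      then have "y \<in> B" using join.prems(2) by blast
      then show ?thesis using \<open>x \<in> A\<close> AB by blast
    qed
  next
    case False
    then have "x \<in> B" using join.prems(1) by blast
    show ?thesis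
    proof (cases "y \<in> B")
      case True
      then show ?thesis using \<open>x \<in> B\<close> join.IH(2) join.prems(3) by blast
    next
      case False
      then have "y \<in> A" using join.prems(2) by blast
      then show ?thesis using \<open>x \<in> B\<close> AB sep_sym by blast
    qed
  qed
qed

lemma sep_not_narrow:
  assumes "sep x y" "extends x (\<tau> @ [(i, False)])" "extends y (\<tau> @ [(i, True)])"
  shows False
proof -
  obtain \<sigma> a b c e where h: "a \<noteq> b" "extends x (\<sigma> @ [(a,c)])" "extends y (\<sigma> @ [(b,e)])"
    using assms(1) unfolding sep_def by blast
  obtain r1 where x1: "x = \<sigma> @ (a,c) # r1" using h(2) unfolding extends_def by auto
  obtain r2 where y1: "y = \<sigma> @ (b,e) # r2" using h(3) unfolding extends_def by auto
  obtain s1 where x2: "x = \<tau> @ (i,False) # s1" using assms(2) unfolding extends_def by auto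
  obtain s2 where y2: "y = \<tau> @ (i,True) # s2" using assms(3) unfolding extends_def by auto
  consider "length \<sigma> < length \<tau>" | "length \<sigma> = length \<tau>" | "length \<tau> < length \<sigma>" by linarith
  then show False
  proof cases
    case 1
    have "x ! length \<sigma> = \<tau> ! length \<sigma>" "y ! length \<sigma> = \<tau> ! length \<sigma>"
      using 1 x2 y2 by (auto simp: nth_append)
    moreover have "x ! length \<sigma> = (a,c)" "y ! length \<sigma> = (b,e)" using x1 y1 by auto
    ultimately show False using h(1) by (metis prod.inject)
  next
    case 2
    have "x ! length \<sigma> = (i,False)" "y ! length \<sigma> = (i,True)" using 2 x2 y2 by auto
    moreover have "x ! length \<sigma> = (a,c)" "y ! length \<sigma> = (b,e)" using x1 y1 by auto
    ultimately show False using h(1) by auto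
  next
    case 3
    have "x ! length \<tau> = \<sigma> ! length \<tau>" "y ! length \<tau> = \<sigma> ! length \<tau>"
      using 3 x1 y1 by (auto simp: nth_append)
    moreover have "x ! length \<tau> = (i,False)" "y ! length \<tau> = (i,True)" using x2 y2 by auto
    ultimately show False by (metis prod.inject)
  qed
qed

lemma up_nonempty: "up_comb d n A \<Longrightarrow> A \<noteq> {}"
  by (induction rule: up_comb.induct) auto

lemma up_pair_sep:
  assumes "up_comb d 1 S" "S = {x, y}" "x \<noteq> y" "sep x y"
  shows False
  using assms(1)
proof cases
  case (single z)
  then show False using assms by auto
next
  case (join A B)
  have SAB: "{x,y} = A \<union> B" using join(1) assms(2) by simp
  have "A \<noteq> {}" using join(2) by (rule up_nonempty)
  moreover have "card A \<le> 1" using join(4) by (simp add: one_enat_def)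
  moreover have "finite (A \<union> B)" unfolding SAB[symmetric] by simp
  then have "finite A" by (rule finite_Un[THEN iffD1, THEN conjunct1])
  ultimately have "card A = 1" by (simp add: le_Suc_eq)
  then obtain a where A: "A = {a}" by (rule card_1_singletonE)
  then have a: "a \<in> {x,y}" using SAB by blast
  obtain b where b: "b \<in> {x,y}" "b \<noteq> a" using assms(3) by blast
  have "b \<in> B" using SAB A b by blast
  then obtain \<tau> i where "extends a (\<tau> @ [(i, False)])" "extends b (\<tau> @ [(i, True)])"
    using join(5) A unfolding narrowly_below_def by blast
  moreover have "sep a b"
  proof -
    have "(a = x \<and> b = y) \<or> (a = y \<and> b = x)" using a b by blast
    then show ?thesis using assms(4) sep_sym by blast
  qed
  ultimately show False using sep_not_narrow by blast
qed

lemma ext_nth: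
  assumes "extends x \<sigma>" "length \<sigma> < length x"
  shows "extends x (\<sigma> @ [x ! length \<sigma>])"
proof -
  obtain \<rho> where r: "x = \<sigma> @ \<rho>" using assms(1) unfolding extends_def by auto
  then obtain p r' where "\<rho> = p # r'" using assms(2) by (cases \<rho>) auto
  then show ?thesis using r unfolding extends_def by auto
qed

lemma ext_nth_eq:
  assumes "extends x (\<sigma> @ [p])"
  shows "x ! length \<sigma> = p"
  using assms unfolding extends_def by auto

lemma ext_trans: "extends x (\<sigma> @ [p]) \<Longrightarrow> extends x \<sigma>"
  unfolding extends_def by auto

lemma build:
  assumes "\<forall>x\<in>C. length x = d \<and> extends x \<sigma>" "C \<noteq> {}"
    "\<forall>x\<in>C. \<forall>y\<in>C. \<not> narrowly_below d {x} {y}"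
  shows "wide_right_comb d \<infinity> C"
  using assms
proof (induction "d - length \<sigma>" arbitrary: \<sigma> C rule: less_induct)
  case less
  show ?case
  proof (cases "length \<sigma> < d")
    case False
    have "\<forall>x\<in>C. x = \<sigma>"
      using less.prems(1) False unfolding extends_def by auto
    then have "C = {\<sigma>}" using less.prems(2) by auto
    moreover have "\<sigma> \<in> seqs d" using less.prems \<open>\<forall>x\<in>C. x = \<sigma>\<close> unfolding seqs_def by auto
    ultimately show ?thesis by (simp add: wide_right_comb.single)
  next
    case True
    define k where "k = length \<sigma>"
    have ext: "\<forall>x\<in>C. extends x (\<sigma> @ [x ! k])" using less.prems(1) True ext_nth k_def by auto
    have uni: "\<exists>j. \<forall>y\<in>C. fst (y ! k) = bb \<longrightarrow> y ! k = (bb, j)" for bb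
    proof (cases "\<exists>x\<in>C. fst (x ! k) = bb")
      case False then show ?thesis by auto
    next
      case True
      then obtain x where x: "x \<in> C" "fst (x ! k) = bb" by auto
      have "\<forall>y\<in>C. fst (y ! k) = bb \<longrightarrow> y ! k = (bb, snd (x ! k))"
      proof (intro ballI impI, rule ccontr)
        fix y assume y: "y \<in> C" "fst (y ! k) = bb" "y ! k \<noteq> (bb, snd (x ! k))"
        then have ne: "snd (y ! k) \<noteq> snd (x ! k)" by (cases "y ! k") auto
        have "x ! k = (bb, snd (x!k))" using x(2) by (cases "x ! k") auto
        then have ex: "extends x (\<sigma> @ [(bb, snd (x!k))])" using ext x(1) by metis
        have "y ! k = (bb, snd (y!k))" using y(2) by (cases "y ! k") auto
        then have ey: "extends y (\<sigma> @ [(bb, snd (y!k))])" using ext y(1) by metis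
        show False
        proof (cases "snd (x ! k)")
          case True
          then have "narrowly_below d {y} {x}" using ex ey ne \<open>length \<sigma> < d\<close>
            unfolding narrowly_below_def by (intro exI[of _ \<sigma>] exI[of _ bb]) auto
          then show False using less.prems(3) x y by blast
        next
          case False
          then have "narrowly_below d {x} {y}" using ex ey ne \<open>length \<sigma> < d\<close>
            unfolding narrowly_below_def by (intro exI[of _ \<sigma>] exI[of _ bb]) auto
          then show False using less.prems(3) x y by blast
        qed
      qed
      then show ?thesis by blast
    qed
    define C0 where "C0 = {x\<in>C. fst (x ! k) = False}"
    define C1 where "C1 = {x\<in>C. fst (x ! k) = True}"
    have CU: "C = C0 \<union> C1" unfolding C0_def C1_def by auto
    have IH: "wide_right_comb d \<infinity> D" if D: "D \<subseteq> C" "D \<noteq> {}" "\<forall>y\<in>D. y ! k = p" for D p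
    proof -
      have "\<forall>x\<in>D. length x = d \<and> extends x (\<sigma> @ [p])" using D ext less.prems(1) by fastforce
      moreover have "d - length (\<sigma> @ [p]) < d - length \<sigma>" using True by simp
      moreover have "\<forall>x\<in>D. \<forall>y\<in>D. \<not> narrowly_below d {x} {y}" using D(1) less.prems(3) by blast
      ultimately show ?thesis using less.hyps D(2) by blast
    qed
    obtain j0 where j0: "\<forall>y\<in>C0. y ! k = (False, j0)" using uni[of False] unfolding C0_def by auto
    obtain j1 where j1: "\<forall>y\<in>C1. y ! k = (True, j1)" using uni[of True] unfolding C1_def by auto
    show ?thesis
    proof (cases "C0 = {}")
      case True
      then have "C = C1" using CU by simp
      then show ?thesis using j1 less.prems(2) by (intro IH[of C "(True, j1)"]) auto
    next
      case F0: False
      show ?thesis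
      proof (cases "C1 = {}")
        case True
        then have "C = C0" using CU by simp
        then show ?thesis using j0 less.prems(2) by (intro IH[of C "(False, j0)"]) auto
      next
        case False
        have w0: "wide_right_comb d \<infinity> C0" using F0 j0 CU by (intro IH[of C0 "(False, j0)"]) auto
        have w1: "wide_right_comb d \<infinity> C1" using False j1 CU by (intro IH[of C1 "(True, j1)"]) auto
        have wl: "widely_left d C0 C1"
          unfolding widely_left_def
        proof (intro exI[of _ \<sigma>] conjI)
          show "length \<sigma> < d" by fact
          show "\<forall>a\<in>C0. extends a (\<sigma> @ [(False, False)]) \<or> extends a (\<sigma> @ [(False, True)])"
          proof
            fix a assume a: "a \<in> C0"
            then have "a \<in> C" "a ! k = (False, j0)" using CU j0 by auto
            then have "extends a (\<sigma> @ [(False, j0)])" using ext by auto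
            then show "extends a (\<sigma> @ [(False, False)]) \<or> extends a (\<sigma> @ [(False, True)])" by (cases j0) auto
          qed
          show "\<forall>a\<in>C1. extends a (\<sigma> @ [(True, False)]) \<or> extends a (\<sigma> @ [(True, True)])"
          proof
            fix a assume a: "a \<in> C1"
            then have "a \<in> C" "a ! k = (True, j1)" using CU j1 by auto
            then have "extends a (\<sigma> @ [(True, j1)])" using ext by auto
            then show "extends a (\<sigma> @ [(True, False)]) \<or> extends a (\<sigma> @ [(True, True)])" by (cases j1) auto
          qed
        qed
        show ?thesis using wide_right_comb.join[OF w0 w1 _ wl] CU by simp
      qed
    qed
  qed
qed

theorem lemma4p5:
  fixes d :: nat and C :: "node set"
  assumes "C \<subseteq> seqs d" and "C \<noteq> {}"
  shows "wide_right_comb d \<infinity> C \<longleftrightarrow> (\<forall>S\<subseteq>C. card S = 2 \<longrightarrow> \<not> up_comb d 1 S)"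
proof
  assume w: "wide_right_comb d \<infinity> C"
  show "\<forall>S\<subseteq>C. card S = 2 \<longrightarrow> \<not> up_comb d 1 S"
  proof (intro allI impI)
    fix S assume S: "S \<subseteq> C" "card S = 2"
    then obtain x y where xy: "x \<noteq> y" "S = {x,y}" by (meson card_2_iff)
    then have "sep x y" using wide_sep[OF w] S by auto
    then show "\<not> up_comb d 1 S" using up_pair_sep xy by blast
  qed
next
  assume h: "\<forall>S\<subseteq>C. card S = 2 \<longrightarrow> \<not> up_comb d 1 S"
  have nb: "\<forall>x\<in>C. \<forall>y\<in>C. \<not> narrowly_below d {x} {y}"
  proof (intro ballI notI)
    fix x y assume xy: "x \<in> C" "y \<in> C" "narrowly_below d {x} {y}"
    have "x \<noteq> y" using xy(3) unfolding narrowly_below_def extends_def by auto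
    have "up_comb d 1 ({x} \<union> {y})"
      using xy assms(1) by (intro up_comb.join up_comb.single) (auto simp: one_enat_def)
    moreover have "card {x,y} = 2" using \<open>x \<noteq> y\<close> by auto
    moreover have "{x} \<union> {y} = {x,y}" by auto
    ultimately show False using h xy by (metis empty_subsetI insert_subset)
  qed
  show "wide_right_comb d \<infinity> C"
    using build[of C d "[]"] assms nb unfolding seqs_def extends_def by auto
qed

end
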